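(* Let $A$ be a word-topic matrix, $\delta\ge0$, $B$ a $\delta$-biased minimum variance inverse of $A$, $x^*\in\mathcal{S}_k$, and let $x$ be the output of the Thresholded Linear Inverse algorithm on a document of $n$ words generated from $x^*$. Then with probability at least $1-2/k$: for every $i\in[k]$, if $x^*_i=0$ then $x_i=0$, and if $x^*_i\ge 4\lambda_\delta(A)\sqrt{(\log k)/n}+2\delta$ then $x_i>0$. In particular, if $x^*$ is $r$-sparse, all its nonzero entries are at least $\epsilon/r$ for some $\epsilon>4\delta r$, and $n\ge 64\,\lambda_\delta(A)^2r^2\log k/\epsilon^2$, then with probability at least $1-2/k$ the support of $x$ equals the support of $x^*$.
   Context: A word-topic matrix is a matrix $A\in\mathbb{R}^{D\times k}$ with nonnegative entries whose columns each sum to $1$. $\mathcal{S}_k=\{z\in\mathbb{R}^k_{\ge0}:\sum_i z_i=1\}$. A document of $n$ words generated from $x\in\mathcal{S}_k$ consists of words drawn i.i.d. from the categorical distribution on $[D]$ with probabilities $Ax$; its count vector $y\in\mathbb{R}^D$ records how many times each word occurs. For a matrix $M$, $\|M\|_{\max}=\max_{i,j}|M_{ij}|$. $\lambda_\delta(A)$ is the optimal value of: minimize $\|B\|_{\max}$ over $B\in\mathbb{R}^{k\times D}$ subject to $\|BA-I_k\|_{\max}\le\delta$; a $\delta$-biased minimum variance inverse is a matrix $B$ with $\|BA-I_k\|_{\max}\le\delta$ and $\|B\|_{\max}=\lambda_\delta(A)$. The Thresholded Linear Inverse algorithm, given $y$ and $B$: computes $\hat x=\frac1n By$; sets $\tau=2\lambda_\delta(A)\sqrt{(\log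 k)/n}+\delta$; outputs $x\in\mathbb{R}^k$ with $x_i=0$ if $\hat x_i<\tau$ and $x_i=\hat x_i$ otherwise. A vector is $r$-sparse if it has at most $r$ nonzero entries. *)

theory Defs
  imports "HOL-Probability.Probability"
begin

text \<open>Matrices are represented as functions nat => nat => real; only entries with
  row index < (number of rows) and column index < (number of columns) matter.
  A is D x k (A j i, word j, topic i); B is k x D.\<close>

definition max_norm :: "nat \<Rightarrow> nat \<Rightarrow> (nat \<Rightarrow> nat \<Rightarrow> real) \<Rightarrow> real" where
  "max_norm m p M = Max (insert 0 {\<bar>M i j\<bar> | i j. i < m \<and> j < p})"

definition word_topic :: "nat \<Rightarrow> nat \<Rightarrow> (nat \<Rightarrow> nat \<Rightarrow> real) \<Rightarrow> bool" where
  "word_topic D k A \<longleftrightarrow> (\<forall>j<D. \<forall>i<k. A j i \<ge> 0) \<and> (\<forall>i<k. (\<Sum>j<D. A j i) = 1)"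

definition in_simplex :: "nat \<Rightarrow> (nat \<Rightarrow> real) \<Rightarrow> bool" where
  "in_simplex k z \<longleftrightarrow> (\<forall>i<k. z i \<ge> 0) \<and> (\<Sum>i<k. z i) = 1"

definition BA_minus_I :: "nat \<Rightarrow> nat \<Rightarrow> (nat \<Rightarrow> nat \<Rightarrow> real) \<Rightarrow> (nat \<Rightarrow> nat \<Rightarrow> real) \<Rightarrow> nat \<Rightarrow> nat \<Rightarrow> real" where
  "BA_minus_I D k B A = (\<lambda>i l. (\<Sum>j<D. B i j * A j l) - (if i = l then 1 else 0))"

definition lambda_delta :: "nat \<Rightarrow> nat \<Rightarrow> (nat \<Rightarrow> nat \<Rightarrow> real) \<Rightarrow> real \<Rightarrow> real" where
  "lambda_delta D k A \<delta> =
     Inf {max_norm k D B | B. max_norm k k (BA_minus_I D k B A) \<le> \<delta>}"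

definition biased_mvi :: "nat \<Rightarrow> nat \<Rightarrow> (nat \<Rightarrow> nat \<Rightarrow> real) \<Rightarrow> real \<Rightarrow> (nat \<Rightarrow> nat \<Rightarrow> real) \<Rightarrow> bool" where
  "biased_mvi D k A \<delta> B \<longleftrightarrow> max_norm k k (BA_minus_I D k B A) \<le> \<delta> \<and>
      max_norm k D B = lambda_delta D k A \<delta>"

definition word_pmf :: "nat \<Rightarrow> nat \<Rightarrow> (nat \<Rightarrow> nat \<Rightarrow> real) \<Rightarrow> (nat \<Rightarrow> real) \<Rightarrow> nat pmf" where
  "word_pmf D k A x = embed_pmf (\<lambda>j. if j < D then (\<Sum>i<k. A j i * x i) else 0)"

definition doc_pmf :: "nat \<Rightarrow> nat \<Rightarrow> nat \<Rightarrow> (nat \<Rightarrow> nat \<Rightarrow> real) \<Rightarrow> (nat \<Rightarrow> real) \<Rightarrow> (nat \<Rightarrow> nat) pmf" where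
  "doc_pmf n D k A x = Pi_pmf {..<n} 0 (\<lambda>_. word_pmf D k A x)"

definition count_vec :: "nat \<Rightarrow> (nat \<Rightarrow> nat) \<Rightarrow> nat \<Rightarrow> real" where
  "count_vec n w j = real (card {t. t < n \<and> w t = j})"

definition TLI :: "nat \<Rightarrow> nat \<Rightarrow> (nat \<Rightarrow> nat \<Rightarrow> real) \<Rightarrow> real \<Rightarrow> (nat \<Rightarrow> nat \<Rightarrow> real) \<Rightarrow> nat \<Rightarrow> (nat \<Rightarrow> real) \<Rightarrow> nat \<Rightarrow> real" where
  "TLI D k A \<delta> B n y =
     (let xhat = (\<lambda>i. (1 / real n) * (\<Sum>j<D. B i j * y j));
          \<tau> = 2 * lambda_delta D k A \<delta> * sqrt (ln (real k) / real n) + \<delta>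
      in (\<lambda>i. if xhat i < \<tau> then 0 else xhat i))"

end

theory Submission
  imports Defs
begin

lemma max_norm_ge:
  assumes "i < m" "j < p" shows "\<bar>M i j\<bar> \<le> max_norm m p M"
proof -
  have "{\<bar>M i j\<bar> | i j. i < m \<and> j < p} = (\<lambda>(i,j). \<bar>M i j\<bar>) ` ({..<m} \<times> {..<p})" by auto
  hence fin: "finite (insert 0 {\<bar>M i j\<bar> | i j. i < m \<and> j < p})" by simp
  show ?thesis unfolding max_norm_def using assms by (intro Max_ge[OF fin]) auto
qed

lemma max_norm_nonneg: "0 \<le> max_norm m p M"
proof -
  have "{\<bar>M i j\<bar> | i j. i < m \<and> j < p} = (\<lambda>(i,j). \<bar>M i j\<bar>) ` ({..<m} \<times> {..<p})" by auto
  hence fin: "finite (insert 0 {\<bar>M i j\<bar> | i j. i < m \<and> j < p})" by simp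
  show ?thesis unfolding max_norm_def by (intro Max_ge[OF fin]) auto
qed

lemma pmf_word:
  assumes "word_topic D k A" "in_simplex k x"
  shows "pmf (word_pmf D k A x) j = (if j < D then (\<Sum>i<k. A j i * x i) else 0)"
  unfolding word_pmf_def
proof (rule pmf_embed_pmf)
  let ?f = "\<lambda>j. if j < D then (\<Sum>i<k. A j i * x i) else 0"
  show nn: "\<And>j. 0 \<le> ?f j" using assms unfolding word_topic_def in_simplex_def
    by (auto intro!: sum_nonneg)
  have "(\<integral>\<^sup>+ j. ennreal (?f j) \<partial>count_space UNIV) = (\<Sum>j<D. ennreal (?f j))"
    by (rule nn_integral_count_space') auto
  also have "\<dots> = ennreal (\<Sum>j<D. ?f j)" using nn by (intro sum_ennreal) 
  also have "(\<Sum>j<D. ?f j) = (\<Sum>j<D. \<Sum>i<k. A j i * x i)" by simp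
  also have "\<dots> = (\<Sum>i<k. x i * (\<Sum>j<D. A j i))" 
    by (subst sum.swap) (simp add: sum_distrib_left mult.commute)
  also have "\<dots> = 1" using assms unfolding word_topic_def in_simplex_def by simp
  finally show "(\<integral>\<^sup>+ j. ennreal (?f j) \<partial>count_space UNIV) = 1" by simp
qed

lemma sum_count:
  "(\<Sum>j<D. B i j * count_vec n w j) = (\<Sum>t<n. (if w t < D then B i (w t) else 0))"
proof -
  have "(\<Sum>t<n. (if w t < D then B i (w t) else 0)) = (\<Sum>t<n. \<Sum>j<D. if w t = j then B i j else 0)"
    by (simp add: sum.delta)
  also have "\<dots> = (\<Sum>j<D. \<Sum>t<n. if w t = j then B i j else 0)" by (rule sum.swap)
  also have "\<dots> = (\<Sum>j<D. B i j * count_vec n w j)"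
  proof (rule sum.cong[OF refl])
    fix j
    have "(\<Sum>t<n. if w t = j then B i j else 0) = (\<Sum>t\<in>{t\<in>{..<n}. w t = j}. B i j)"
      using sum.inter_filter[of "{..<n}" "\<lambda>_. B i j" "\<lambda>t. w t = j"] by simp
    also have "{t\<in>{..<n}. w t = j} = {t. t < n \<and> w t = j}" by auto
    also have "(\<Sum>t\<in>{t. t < n \<and> w t = j}. B i j) = B i j * count_vec n w j" unfolding count_vec_def by simp
    finally show "(\<Sum>t<n. if w t = j then B i j else 0) = B i j * count_vec n w j" .
  qed
  finally show ?thesis by simp
qed

lemma hoeff:
  fixes L e :: real and c :: "nat \<Rightarrow> real"
  assumes wt: "word_topic D k A" and sx: "in_simplex k x"
    and bnd: "\<And>j. \<bar>c j\<bar> \<le> L" and L: "L > 0" and n: "n > 0" and e: "e \<ge> 0"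
  shows "measure_pmf.prob (doc_pmf n D k A x)
     {w. \<bar>(\<Sum>t<n. c (w t)) - real n * (\<Sum>j<D. c j * (\<Sum>l<k. A j l * x l))\<bar> \<ge> real n * e}
     \<le> 2 * exp (- (real n * e\<^sup>2) / (2 * L\<^sup>2))"
proof -
  let ?P = "doc_pmf n D k A x"
  let ?p = "word_pmf D k A x"
  let ?mu = "(\<Sum>j<D. c j * (\<Sum>l<k. A j l * x l))"
  have Eq: "measure_pmf.expectation ?p c = ?mu"
  proof -
    have "measure_pmf.expectation ?p c = (\<Sum>j<D. c j * pmf ?p j)"
    proof (rule integral_measure_pmf_real)
      fix a assume "a \<in> set_pmf ?p" "c a \<noteq> 0"
      hence "pmf ?p a \<noteq> 0" by (simp add: set_pmf_iff)
      thus "a \<in> {..<D}" using pmf_word[OF wt sx, of a] by (auto split: if_splits)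
    qed simp
    also have "\<dots> = ?mu" using pmf_word[OF wt sx] by simp
    finally show ?thesis .
  qed
  interpret H: Hoeffding_ineq "measure_pmf ?P" "{..<n}" "\<lambda>t w. c (w t)" "\<lambda>_. -L" "\<lambda>_. L"
     "\<Sum>t\<in>{..<n}. measure_pmf.expectation ?P (\<lambda>w. c (w t))"
  proof unfold_locales
    show "prob_space.indep_vars (measure_pmf ?P) (\<lambda>_. borel) (\<lambda>t w. c (w t)) {..<n}"
      unfolding doc_pmf_def
      by (intro prob_space.indep_vars_compose2[OF _ indep_vars_Pi_pmf])
         (auto simp: measure_pmf.prob_space_axioms)
    fix t show "AE w in measure_pmf ?P. c (w t) \<in> {-L..L}"
    proof (rule AE_I2)
      fix w show "c (w t) \<in> {-L..L}" using bnd[of "w t"] by (auto simp: abs_le_iff)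
    qed
  qed auto
  have ex: "measure_pmf.expectation ?P (\<lambda>w. c (w t)) = ?mu" if "t < n" for t
  proof -
    have "measure_pmf.expectation ?P (\<lambda>w. c (w t)) = measure_pmf.expectation (map_pmf (\<lambda>f. f t) ?P) c"
      by simp
    also have "map_pmf (\<lambda>f. f t) ?P = ?p" unfolding doc_pmf_def using that by (subst Pi_pmf_component) auto
    finally show ?thesis using Eq by simp
  qed
  have mu: "(\<Sum>t\<in>{..<n}. measure_pmf.expectation ?P (\<lambda>w. c (w t))) = real n * ?mu"
    using ex by simp
  have "measure_pmf.prob ?P {w \<in> space (measure_pmf ?P). \<bar>(\<Sum>t\<in>{..<n}. c (w t)) - real n * ?mu\<bar> \<ge> real n * e}
     \<le> 2 * exp (-2 * (real n * e)\<^sup>2 / (\<Sum>t\<in>{..<n}. (L - - L)\<^sup>2))"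
    using H.Hoeffding_ineq_abs_ge[of "real n * e"] e n L unfolding mu by simp
  also have "-2 * (real n * e)\<^sup>2 / (\<Sum>t\<in>{..<n}. (L - - L)\<^sup>2) = - (real n * e\<^sup>2) / (2 * L\<^sup>2)"
    using n L by (simp add: power2_eq_square field_simps)
  finally show ?thesis by simp
qed

lemma main_prob:
  fixes D k n :: nat and A B :: "nat \<Rightarrow> nat \<Rightarrow> real" and \<delta> :: real and xs :: "nat \<Rightarrow> real"
  assumes wt: "word_topic D k A" and d0: "\<delta> \<ge> 0" and mvi: "biased_mvi D k A \<delta> B"
    and sx: "in_simplex k xs" and n: "n > 0" and k3: "k \<ge> 3"
  defines "L \<equiv> lambda_delta D k A \<delta>"
  defines "\<tau> \<equiv> 2 * L * sqrt (ln (real k) / real n) + \<delta>"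
  defines "xhat \<equiv> \<lambda>w i. (1 / real n) * (\<Sum>j<D. B i j * count_vec n w j)"
  shows "\<tau> > 0 \<and> measure_pmf.prob (doc_pmf n D k A xs)
           {w. \<forall>i<k. xhat w i < xs i + \<tau> \<and> xhat w i \<ge> xs i - \<tau>} \<ge> 1 - 2 / real k"
proof -
  let ?P = "doc_pmf n D k A xs"
  let ?G = "{w. \<forall>i<k. xhat w i < xs i + \<tau> \<and> xhat w i \<ge> xs i - \<tau>}"
  have Bb: "\<bar>B i j\<bar> \<le> L" if "i < k" "j < D" for i j
    using max_norm_ge[OF that, of B] mvi unfolding biased_mvi_def L_def by simp
  have Eb: "\<bar>BA_minus_I D k B A i l\<bar> \<le> \<delta>" if "i < k" "l < k" for i l
    using max_norm_ge[OF that, of "BA_minus_I D k B A"] mvi unfolding biased_mvi_def by simp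
  have L0: "L \<ge> 0" using mvi max_norm_nonneg unfolding biased_mvi_def L_def by metis
  have xs0: "\<And>i. i < k \<Longrightarrow> xs i \<ge> 0" and xs1: "(\<Sum>i<k. xs i) = 1" using sx unfolding in_simplex_def by auto
  have xsle: "xs i \<le> 1" if "i < k" for i
  proof -
    have "xs i \<le> (\<Sum>i<k. xs i)" using that xs0 by (intro member_le_sum) auto
    thus ?thesis using xs1 by simp
  qed
  define mu where "mu i = (\<Sum>j<D. B i j * (\<Sum>l<k. A j l * xs l))" for i
  have mub: "\<bar>mu i - xs i\<bar> \<le> \<delta>" if i: "i < k" for i
  proof -
    have "mu i = (\<Sum>l<k. (\<Sum>j<D. B i j * A j l) * xs l)"
      unfolding mu_def by (simp add: sum_distrib_left sum_distrib_right mult.assoc sum.swap[of _ "{..<D}"])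
    also have "\<dots> = (\<Sum>l<k. BA_minus_I D k B A i l * xs l + (if i = l then xs l else 0))"
      unfolding BA_minus_I_def by (intro sum.cong) (auto simp: algebra_simps)
    also have "\<dots> = (\<Sum>l<k. BA_minus_I D k B A i l * xs l) + xs i"
      using i by (simp add: sum.distrib)
    finally have eq: "mu i - xs i = (\<Sum>l<k. BA_minus_I D k B A i l * xs l)" by simp
    have "\<bar>\<Sum>l<k. BA_minus_I D k B A i l * xs l\<bar> \<le> (\<Sum>l<k. \<bar>BA_minus_I D k B A i l * xs l\<bar>)"
      by (rule sum_abs)
    also have "\<dots> \<le> (\<Sum>l<k. \<delta> * xs l)"
      using Eb[OF i] xs0 by (intro sum_mono) (auto simp: abs_mult intro: mult_right_mono)
    also have "\<dots> = \<delta>" using xs1 by (simp add: sum_distrib_left[symmetric])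
    finally show ?thesis using eq by simp
  qed
  have lnk: "ln (real k) > 0" using k3 by simp
  show ?thesis
  proof (cases "L = 0")
    case True
    have B0: "B i j = 0" if "i < k" "j < D" for i j using Bb[OF that] True by simp
    have "\<bar>BA_minus_I D k B A 0 0\<bar> = 1" using B0 k3 unfolding BA_minus_I_def by simp
    hence d1: "\<delta> \<ge> 1" using Eb[of 0 0] k3 by simp
    have t: "\<tau> = \<delta>" unfolding \<tau>_def True by simp
    have "?G = UNIV"
    proof safe
      fix w i assume i: "i < k"
      have "xhat w i = 0" unfolding xhat_def using B0[OF i] by simp
      thus "xhat w i < xs i + \<tau>" "xhat w i \<ge> xs i - \<tau>" using t d1 xs0[OF i] xsle[OF i] by auto
    qed simp
    thus ?thesis using t d1 by simp
  next
    case False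
    hence Lp: "L > 0" using L0 by simp
    define e where "e = 2 * L * sqrt (ln (real k) / real n)"
    have ep: "e > 0" unfolding e_def using Lp lnk n by simp
    have tp: "\<tau> > 0" unfolding \<tau>_def using ep d0 e_def by simp
    define c where "c i j = (if j < D then B i j else 0)" for i j
    define Bad where "Bad i = {w. \<bar>(\<Sum>t<n. c i (w t)) - real n * mu i\<bar> \<ge> real n * e}" for i
    have e2: "real n * e\<^sup>2 / (2 * L\<^sup>2) = 2 * ln (real k)"
    proof -
      have "e\<^sup>2 = 4 * L\<^sup>2 * (ln (real k) / real n)"
        unfolding e_def using lnk n by (simp add: power_mult_distrib)
      thus ?thesis using n Lp by (simp add: field_simps)
    qed
    have ek: "exp (- (2 * ln (real k))) = 1 / (real k)\<^sup>2"
    proof -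
      have "exp (2 * ln (real k)) = exp (ln (real k)) ^ 2" using exp_of_nat_mult[of 2 "ln (real k)"] by simp
      also have "\<dots> = (real k)\<^sup>2" using k3 by simp
      finally show ?thesis by (simp add: exp_minus divide_inverse)
    qed
    have pb: "measure_pmf.prob ?P (Bad i) \<le> 2 / (real k)\<^sup>2" if i: "i < k" for i
    proof -
      have mc: "mu i = (\<Sum>j<D. c i j * (\<Sum>l<k. A j l * xs l))" unfolding mu_def c_def by simp
      have cb: "\<And>j. \<bar>c i j\<bar> \<le> L" using Bb[OF i] Lp by (simp add: c_def)
      have "measure_pmf.prob ?P (Bad i) \<le> 2 * exp (- (real n * e\<^sup>2) / (2 * L\<^sup>2))"
        unfolding Bad_def mc
        by (rule hoeff[OF wt sx cb Lp n]) (use ep in simp)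
      also have "\<dots> = 2 / (real k)\<^sup>2" using e2 ek by (simp add: minus_divide_left[symmetric])
      finally show ?thesis .
    qed
    have "measure_pmf.prob ?P (\<Union>i<k. Bad i) \<le> (\<Sum>i<k. measure_pmf.prob ?P (Bad i))"
      by (rule measure_pmf.finite_measure_subadditive_finite) auto
    also have "\<dots> \<le> (\<Sum>i<k. 2 / (real k)\<^sup>2)" using pb by (intro sum_mono) auto
    also have "\<dots> = 2 / real k" using k3 by (simp add: power2_eq_square)
    finally have ub: "measure_pmf.prob ?P (\<Union>i<k. Bad i) \<le> 2 / real k" .
    have sub: "UNIV - (\<Union>i<k. Bad i) \<subseteq> ?G"
    proof
      fix w assume "w \<in> UNIV - (\<Union>i<k. Bad i)"
      hence nb: "\<forall>i\<in>{..<k}. w \<notin> Bad i" by auto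
      show "w \<in> ?G"
      proof (intro CollectI allI impI)
      fix i assume i: "i < k"
      have xh: "xhat w i = (1 / real n) * (\<Sum>t<n. c i (w t))" unfolding xhat_def c_def sum_count ..
      have lt: "\<bar>(\<Sum>t<n. c i (w t)) - real n * mu i\<bar> < real n * e" using nb i unfolding Bad_def by (simp add: not_le)
      have "xhat w i - mu i = ((\<Sum>t<n. c i (w t)) - real n * mu i) / real n" using xh n by (simp add: field_simps)
      hence "\<bar>xhat w i - mu i\<bar> = \<bar>(\<Sum>t<n. c i (w t)) - real n * mu i\<bar> / real n" by simp
      also have "\<dots> < e" using lt n by (simp add: pos_divide_less_eq mult.commute)
      finally have "\<bar>xhat w i - mu i\<bar> < e" .
      thus "xhat w i < xs i + \<tau> \<and> xhat w i \<ge> xs i - \<tau>" using mub[OF i] unfolding \<tau>_def e_def by auto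
    qed
    qed
    have "1 - 2 / real k \<le> 1 - measure_pmf.prob ?P (\<Union>i<k. Bad i)" using ub by simp
    also have "\<dots> = measure_pmf.prob ?P (UNIV - (\<Union>i<k. Bad i))"
      using measure_pmf.prob_compl[of "\<Union>i<k. Bad i" ?P] by simp
    also have "\<dots> \<le> measure_pmf.prob ?P ?G" using sub by (intro measure_pmf.finite_measure_mono) auto
    finally show ?thesis using tp by simp
  qed
qed

theorem corollary4p3:
  fixes D k n :: nat and A B :: "nat \<Rightarrow> nat \<Rightarrow> real" and \<delta> :: real and xs :: "nat \<Rightarrow> real"
  assumes "word_topic D k A" and "\<delta> \<ge> 0" and "biased_mvi D k A \<delta> B"
    and "in_simplex k xs" and "n > 0"
  shows "measure_pmf.prob (doc_pmf n D k A xs)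
           {w. \<forall>i<k. let x = TLI D k A \<delta> B n (count_vec n w) in
                 (xs i = 0 \<longrightarrow> x i = 0) \<and>
                 (xs i \<ge> 4 * lambda_delta D k A \<delta> * sqrt (ln (real k) / real n) + 2 * \<delta>
                    \<longrightarrow> x i > 0)}
         \<ge> 1 - 2 / real k
       \<and> (\<forall>(r::nat) (\<epsilon>::real).
            card {i. i < k \<and> xs i \<noteq> 0} \<le> r \<and>
            (\<forall>i<k. xs i \<noteq> 0 \<longrightarrow> xs i \<ge> \<epsilon> / real r) \<and>
            \<epsilon> > 4 * \<delta> * real r \<and>
            real n \<ge> 64 * (lambda_delta D k A \<delta>)\<^sup>2 * (real r)\<^sup>2 * ln (real k) / \<epsilon>\<^sup>2
          \<longrightarrow> measure_pmf.prob (doc_pmf n D k A xs)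
                {w. {i. i < k \<and> TLI D k A \<delta> B n (count_vec n w) i \<noteq> 0}
                    = {i. i < k \<and> xs i \<noteq> 0}}
              \<ge> 1 - 2 / real k)"
proof -
  let ?P = "doc_pmf n D k A xs"
  define L where "L = lambda_delta D k A \<delta>"
  define \<tau> where "\<tau> = 2 * L * sqrt (ln (real k) / real n) + \<delta>"
  define xhat where "xhat = (\<lambda>w i. (1 / real n) * (\<Sum>j<D. B i j * count_vec n w j))"
  define G where "G = {w. \<forall>i<k. xhat w i < xs i + \<tau> \<and> xhat w i \<ge> xs i - \<tau>}"
  have TLIeq: "TLI D k A \<delta> B n (count_vec n w) i = (if xhat w i < \<tau> then 0 else xhat w i)" for w i
    unfolding TLI_def Let_def L_def \<tau>_def xhat_def by simp
  have thr: "4 * lambda_delta D k A \<delta> * sqrt (ln (real k) / real n) + 2 * \<delta> = 2 * \<tau>"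
    unfolding \<tau>_def L_def by simp
  have xs0: "\<And>i. i < k \<Longrightarrow> xs i \<ge> 0" and xs1: "(\<Sum>i<k. xs i) = 1" using assms(4) unfolding in_simplex_def by auto
  have det: "(xs i = 0 \<longrightarrow> TLI D k A \<delta> B n (count_vec n w) i = 0) \<and>
             (xs i \<ge> 2 * \<tau> \<longrightarrow> TLI D k A \<delta> B n (count_vec n w) i > 0)"
    if "w \<in> G" "i < k" "\<tau> > 0" for w i
  proof -
    have a: "xhat w i < xs i + \<tau>" "xhat w i \<ge> xs i - \<tau>" using that unfolding G_def by auto
    show ?thesis unfolding TLIeq using a that(3) by auto
  qed
  have triv: "measure_pmf.prob ?P S \<ge> 1 - 2 / real k" if "k \<le> 2" "k = 0 \<Longrightarrow> S = UNIV" for S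
  proof (cases "k = 0")
    case True thus ?thesis using that by simp
  next
    case False
    hence "1 - 2 / real k \<le> 0" using that(1) by (simp add: field_simps)
    thus ?thesis using measure_nonneg[of "measure_pmf ?P" S] by linarith
  qed
  have big: "\<tau> > 0 \<and> measure_pmf.prob ?P G \<ge> 1 - 2 / real k" if "k \<ge> 3"
    using main_prob[OF assms(1,2,3,4,5) that] unfolding G_def \<tau>_def L_def xhat_def by simp
  show ?thesis
  proof (intro conjI allI impI)
    let ?S = "{w. \<forall>i<k. let x = TLI D k A \<delta> B n (count_vec n w) in
                 (xs i = 0 \<longrightarrow> x i = 0) \<and>
                 (xs i \<ge> 4 * lambda_delta D k A \<delta> * sqrt (ln (real k) / real n) + 2 * \<delta>
                    \<longrightarrow> x i > 0)}"
    show "measure_pmf.prob ?P ?S \<ge> 1 - 2 / real k"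
    proof (cases "k \<ge> 3")
      case True
      have "G \<subseteq> ?S" using det big[OF True] unfolding thr Let_def by blast
      hence "measure_pmf.prob ?P G \<le> measure_pmf.prob ?P ?S" by (intro measure_pmf.finite_measure_mono) auto
      thus ?thesis using big[OF True] by linarith
    next
      case False thus ?thesis by (intro triv) auto
    qed
  next
    fix r :: nat and \<epsilon> :: real
    assume h: "card {i. i < k \<and> xs i \<noteq> 0} \<le> r \<and>
            (\<forall>i<k. xs i \<noteq> 0 \<longrightarrow> xs i \<ge> \<epsilon> / real r) \<and>
            \<epsilon> > 4 * \<delta> * real r \<and>
            real n \<ge> 64 * (lambda_delta D k A \<delta>)\<^sup>2 * (real r)\<^sup>2 * ln (real k) / \<epsilon>\<^sup>2"
    let ?S = "{w. {i. i < k \<and> TLI D k A \<delta> B n (count_vec n w) i \<noteq> 0} = {i. i < k \<and> xs i \<noteq> 0}}"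
    show "measure_pmf.prob ?P ?S \<ge> 1 - 2 / real k"
    proof (cases "k \<ge> 3")
      case k3: True
      have r0: "r > 0"
      proof (rule ccontr)
        assume "\<not> r > 0"
        hence "card {i. i < k \<and> xs i \<noteq> 0} = 0" using h by simp
        hence "{i. i < k \<and> xs i \<noteq> 0} = {}" by simp
        hence "(\<Sum>i<k. xs i) = 0" by (intro sum.neutral) auto
        thus False using xs1 by simp
      qed
      have ep: "\<epsilon> > 0" using h assms(2) r0 by (smt (verit) mult_nonneg_nonneg of_nat_0_le_iff)
      have L0: "L \<ge> 0" using assms(3) max_norm_nonneg unfolding biased_mvi_def L_def by metis
      have lnk: "ln (real k) \<ge> 0" using k3 by simp
      have nb: "real n * \<epsilon>\<^sup>2 \<ge> 64 * L\<^sup>2 * (real r)\<^sup>2 * ln (real k)"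
        using h ep unfolding L_def by (simp add: pos_divide_le_eq)
      have "L * sqrt (ln (real k) / real n) = sqrt (L\<^sup>2 * ln (real k) / real n)"
        using L0 real_sqrt_mult[of "L\<^sup>2" "ln (real k) / real n"] by simp
      also have "\<dots> \<le> sqrt ((\<epsilon> / (8 * real r))\<^sup>2)"
      proof (rule real_sqrt_le_mono)
        have "L\<^sup>2 * ln (real k) / real n = (64 * L\<^sup>2 * (real r)\<^sup>2 * ln (real k)) / (64 * (real r)\<^sup>2 * real n)"
          using r0 by (simp add: field_simps)
        also have "\<dots> \<le> (real n * \<epsilon>\<^sup>2) / (64 * (real r)\<^sup>2 * real n)"
          using nb r0 assms(5) by (intro divide_right_mono) auto
        also have "\<dots> = (\<epsilon> / (8 * real r))\<^sup>2" using assms(5) by (simp add: field_simps power2_eq_square)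
        finally show "L\<^sup>2 * ln (real k) / real n \<le> (\<epsilon> / (8 * real r))\<^sup>2" .
      qed
      also have "\<dots> = \<epsilon> / (8 * real r)" using ep r0 by simp
      finally have s1: "L * sqrt (ln (real k) / real n) \<le> \<epsilon> / (8 * real r)" .
      have s2: "\<delta> < \<epsilon> / (4 * real r)" using h r0 by (simp add: field_simps)
      have "2 * \<tau> = 4 * (L * sqrt (ln (real k) / real n)) + 2 * \<delta>" unfolding \<tau>_def by simp
      also have "\<dots> \<le> \<epsilon> / real r" using s1 s2 r0 by (simp add: field_simps)
      finally have tle: "2 * \<tau> \<le> \<epsilon> / real r" .
      have "G \<subseteq> ?S"
      proof
        fix w assume w: "w \<in> G"
        show "w \<in> ?S"
        proof (rule CollectI, rule set_eqI, rule iffI)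
          fix i assume "i \<in> {i. i < k \<and> TLI D k A \<delta> B n (count_vec n w) i \<noteq> 0}"
          thus "i \<in> {i. i < k \<and> xs i \<noteq> 0}" using det[OF w _ conjunct1[OF big[OF k3]]] by auto
        next
          fix i assume i: "i \<in> {i. i < k \<and> xs i \<noteq> 0}"
          hence "xs i \<ge> 2 * \<tau>" using h tle by force
          thus "i \<in> {i. i < k \<and> TLI D k A \<delta> B n (count_vec n w) i \<noteq> 0}"
            using i det[OF w _ conjunct1[OF big[OF k3]], of i] by auto
        qed
      qed
      hence "measure_pmf.prob ?P G \<le> measure_pmf.prob ?P ?S" by (intro measure_pmf.finite_measure_mono) auto
      thus ?thesis using big[OF k3] by linarith
    next
      case False thus ?thesis by (intro triv) auto
    qed
  qed
qed

end
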